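(* Assume (C1) and (C2). For all $u\in\mathcal{D}$ and $t\ge0$, $$I(u)\ge I(tu)+\frac{1-t^q}{q}\langle I'(u),u\rangle+\Big(\frac{1-t^p}{p}-\frac{1-t^q}{q}\Big)\|u\|^p.$$
   Context: Fix real numbers $p,q,r$ with $1<p<q$, $\frac p2$ a positive integer, and $r\ge1$, and functions $a,b,c:\mathbb{Z}\to(0,+\infty)$. Conditions: - (C1) There is $b_0>0$ with $b(n)\ge b_0$ for all $n$ and $b(n)\to+\infty$ as $|n|\to\infty$. - (C2) There is $c_0>0$ with $c(n)\le c_0$ for all $n$ and $\sum_n c(n)<+\infty$. Notation and spaces: - $\Delta u(n)=u(n+1)-u(n)$. - $E$ is the set of real sequences $u$ with $\|u\|:=\big(\sum_n[a(n)|\Delta u(n)|^p+b(n)|u(n)|^p]\big)^{1/p}<\infty$. - $\mathcal{D}=\{u\in E:\sum_n c(n)|u(n)|^q\ln|u(n)|^r<+\infty\}$, where terms with $u(n)=0$ are read as $0$. For $u,v\in\mathcal{D}$: - $I(u)=\frac1p\|u\|^p+\frac{r}{q^2}\sum_n c(n)|u(n)|^q-\frac1q\sum_n c(n)|u(n)|^q\ln|u(n)|^r$. - $\langle I'(u),v\rangle=\sum_n[a(n)|\Delta u(n)|^{p-2}\Delta u(n)\Delta v(n)+b(n)|u(n)|^{p-2}u(n)v(n)]-\sum_n c(n)|u(n)|^{q-2}u(n)v(n)\ln|u(n)|^r$. *)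

theory Defs
  imports "HOL-Analysis.Analysis"
begin

definition fdiff :: "(int \<Rightarrow> real) \<Rightarrow> int \<Rightarrow> real" where
  "fdiff u n = u (n + 1) - u n"

definition Eterm :: "(int \<Rightarrow> real) \<Rightarrow> (int \<Rightarrow> real) \<Rightarrow> real \<Rightarrow> (int \<Rightarrow> real) \<Rightarrow> int \<Rightarrow> real" where
  "Eterm a b p u n = a n * \<bar>fdiff u n\<bar> powr p + b n * \<bar>u n\<bar> powr p"

definition inE :: "(int \<Rightarrow> real) \<Rightarrow> (int \<Rightarrow> real) \<Rightarrow> real \<Rightarrow> (int \<Rightarrow> real) \<Rightarrow> bool" where
  "inE a b p u \<longleftrightarrow> Eterm a b p u summable_on UNIV"

definition normE :: "(int \<Rightarrow> real) \<Rightarrow> (int \<Rightarrow> real) \<Rightarrow> real \<Rightarrow> (int \<Rightarrow> real) \<Rightarrow> real" where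
  "normE a b p u = (\<Sum>\<^sub>\<infinity>n. Eterm a b p u n) powr (1 / p)"

text \<open>c(n) |u(n)|^q ln |u(n)|^r; for u(n)=0 this is 0 since 0 powr q = 0.\<close>
definition logterm :: "(int \<Rightarrow> real) \<Rightarrow> real \<Rightarrow> real \<Rightarrow> (int \<Rightarrow> real) \<Rightarrow> int \<Rightarrow> real" where
  "logterm c q r u n = c n * \<bar>u n\<bar> powr q * ln (\<bar>u n\<bar> powr r)"

definition inD :: "(int \<Rightarrow> real) \<Rightarrow> (int \<Rightarrow> real) \<Rightarrow> (int \<Rightarrow> real) \<Rightarrow> real \<Rightarrow> real \<Rightarrow> real \<Rightarrow> (int \<Rightarrow> real) \<Rightarrow> bool" where
  "inD a b c p q r u \<longleftrightarrow> inE a b p u \<and> logterm c q r u summable_on UNIV"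

definition Ifun :: "(int \<Rightarrow> real) \<Rightarrow> (int \<Rightarrow> real) \<Rightarrow> (int \<Rightarrow> real) \<Rightarrow> real \<Rightarrow> real \<Rightarrow> real \<Rightarrow> (int \<Rightarrow> real) \<Rightarrow> real" where
  "Ifun a b c p q r u =
     (1 / p) * normE a b p u powr p
     + (r / q\<^sup>2) * (\<Sum>\<^sub>\<infinity>n. c n * \<bar>u n\<bar> powr q)
     - (1 / q) * (\<Sum>\<^sub>\<infinity>n. logterm c q r u n)"

definition dI :: "(int \<Rightarrow> real) \<Rightarrow> (int \<Rightarrow> real) \<Rightarrow> (int \<Rightarrow> real) \<Rightarrow> real \<Rightarrow> real \<Rightarrow> real \<Rightarrow> (int \<Rightarrow> real) \<Rightarrow> (int \<Rightarrow> real) \<Rightarrow> real" where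
  "dI a b c p q r u v =
     (\<Sum>\<^sub>\<infinity>n. a n * \<bar>fdiff u n\<bar> powr (p - 2) * fdiff u n * fdiff v n
              + b n * \<bar>u n\<bar> powr (p - 2) * u n * v n)
     - (\<Sum>\<^sub>\<infinity>n. c n * \<bar>u n\<bar> powr (q - 2) * u n * v n * ln (\<bar>u n\<bar> powr r))"

end

theory Submission
  imports Defs
begin

lemma single_le_infsum:
  fixes g :: "int \<Rightarrow> real"
  assumes "g summable_on UNIV" "\<And>n. g n \<ge> 0"
  shows "g n \<le> infsum g UNIV"
proof -
  have "infsum g {n} \<le> infsum g UNIV"
    by (rule infsum_mono_neutral) (use assms in auto)
  then show ?thesis by simp
qed

lemma key_ineq:
  fixes t q :: real assumes "t \<ge> 0" "q > 0"
  shows "0 \<le> 1 - t powr q + q * (t powr q * ln t)"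
proof (cases "t = 0")
  case True then show ?thesis by simp
next
  case False
  define s where "s = t powr q"
  have s: "s > 0" using False assms by (simp add: s_def)
  have "ln (1/s) \<le> 1/s - 1" using s by (intro ln_le_minus_one) simp
  then have "- ln s \<le> 1/s - 1" using s by (simp add: ln_div)
  then have "s * (- ln s) \<le> s * (1/s - 1)" using s by (intro mult_left_mono) auto
  moreover have "s * (1/s - 1) = 1 - s" using s by (simp add: field_simps)
  ultimately have "0 \<le> 1 - s + s * ln s" by (simp add: algebra_simps)
  moreover have eq: "q * (t powr q * ln t) = s * ln s" using False assms
    by (simp add: s_def ln_powr)
  ultimately show ?thesis using s_def by linarith
qed

theorem corollary2p3:
  fixes p q r t :: real and a b c :: "int \<Rightarrow> real"
  assumes "1 < p" "p < q" "p / 2 \<in> \<nat>" "r \<ge> 1"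
    and "\<And>n. a n > 0" "\<And>n. b n > 0" "\<And>n. c n > 0"
    and C1: "\<exists>b0>0. (\<forall>n. b n \<ge> b0) \<and> filterlim (\<lambda>n. b n) at_top (sup at_top at_bot)"
    and C2: "\<exists>c0>0. (\<forall>n. c n \<le> c0) \<and> c summable_on UNIV"
    and u: "inD a b c p q r u" and t: "t \<ge> 0"
  shows "Ifun a b c p q r u \<ge> Ifun a b c p q r (\<lambda>n. t * u n)
           + (1 - t powr q) / q * dI a b c p q r u u
           + ((1 - t powr p) / p - (1 - t powr q) / q) * normE a b p u powr p"
proof -
  obtain b0 where b0: "b0 > 0" "\<And>n. b n \<ge> b0" using C1 by auto
  obtain c0 where c0: "c0 > 0" "\<And>n. c n \<le> c0" using C2 by auto
  have Esum: "Eterm a b p u summable_on UNIV" and Lsum: "logterm c q r u summable_on UNIV"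
    using u by (auto simp: inD_def inE_def)
  have Enn: "\<And>v n. Eterm a b p v n \<ge> 0"
    unfolding Eterm_def using assms(5,6)
    by (intro add_nonneg_nonneg mult_nonneg_nonneg) (auto simp: less_imp_le)
  define S where "S = infsum (Eterm a b p u) UNIV"
  define A where "A = (\<Sum>\<^sub>\<infinity>n. c n * \<bar>u n\<bar> powr q)"
  define L where "L = infsum (logterm c q r u) UNIV"
  have S0: "S \<ge> 0" unfolding S_def by (rule infsum_nonneg) (use Enn in auto)
  have A0: "A \<ge> 0" unfolding A_def by (rule infsum_nonneg) (simp add: assms(7) less_imp_le)
  have normS: "normE a b p u powr p = S"
    using S0 assms(1) by (simp add: normE_def S_def powr_powr flip: S_def)
  define M where "M = S / b0"
  have uM: "\<bar>u n\<bar> powr p \<le> M" for n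
  proof -
    have "b0 * \<bar>u n\<bar> powr p \<le> b n * \<bar>u n\<bar> powr p" using b0 by (intro mult_right_mono) auto
    also have "\<dots> \<le> Eterm a b p u n" using assms(5)[of n] by (simp add: Eterm_def less_imp_le)
    also have "\<dots> \<le> S" unfolding S_def by (rule single_le_infsum[OF Esum Enn])
    finally show ?thesis using b0 by (simp add: M_def field_simps)
  qed
  have M0: "M \<ge> 0" using S0 b0 by (simp add: M_def)
  define K where "K = M powr ((q - p) / p)"
  have K0: "K \<ge> 0" by (simp add: K_def)
  have uq: "\<bar>u n\<bar> powr q \<le> K * \<bar>u n\<bar> powr p" for n
  proof -
    have "\<bar>u n\<bar> powr q = \<bar>u n\<bar> powr (q - p) * \<bar>u n\<bar> powr p"
      by (subst powr_add[symmetric]) simp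
    also have "\<bar>u n\<bar> powr (q - p) = (\<bar>u n\<bar> powr p) powr ((q - p) / p)"
      using assms(1) by (simp add: powr_powr)
    also have "\<dots> \<le> K" unfolding K_def
      by (rule powr_mono2) (use assms(1,2) uM in auto)
    finally show ?thesis by (simp add: mult_right_mono)
  qed
  have Asum: "(\<lambda>n. c n * \<bar>u n\<bar> powr q) summable_on UNIV"
  proof (rule summable_on_comparison_test)
    show "(\<lambda>n. (c0 * K / b0) * Eterm a b p u n) summable_on UNIV"
      by (rule summable_on_cmult_right[OF Esum])
    fix n :: int
    show "0 \<le> c n * \<bar>u n\<bar> powr q" using assms(7)[of n] by (simp add: less_imp_le)
    have "c n * \<bar>u n\<bar> powr q \<le> c0 * (K * \<bar>u n\<bar> powr p)"
      using c0 assms(7)[of n] uq[of n] by (intro mult_mono) (auto simp: less_imp_le)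
    also have "\<dots> = (c0 * K / b0) * (b0 * \<bar>u n\<bar> powr p)" using b0 by simp
    also have "\<dots> \<le> (c0 * K / b0) * Eterm a b p u n"
    proof (rule mult_left_mono)
      have "b0 * \<bar>u n\<bar> powr p \<le> b n * \<bar>u n\<bar> powr p" using b0 by (intro mult_right_mono) auto
      also have "\<dots> \<le> Eterm a b p u n" using assms(5)[of n] by (simp add: Eterm_def less_imp_le)
      finally show "b0 * \<bar>u n\<bar> powr p \<le> Eterm a b p u n" .
      show "0 \<le> c0 * K / b0" using c0 K0 b0 by simp
    qed
    finally show "c n * \<bar>u n\<bar> powr q \<le> (c0 * K / b0) * Eterm a b p u n" .
  qed
  have Et: "Eterm a b p (\<lambda>n. t * u n) n = t powr p * Eterm a b p u n" for n
  proof -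
    have "fdiff (\<lambda>n. t * u n) n = t * fdiff u n" by (simp add: fdiff_def right_diff_distrib)
    then show ?thesis using t by (simp add: Eterm_def abs_mult powr_mult algebra_simps)
  qed
  have normt: "normE a b p (\<lambda>n. t * u n) powr p = t powr p * S"
  proof -
    have "infsum (Eterm a b p (\<lambda>n. t * u n)) UNIV = t powr p * S"
      by (simp add: Et[abs_def] S_def infsum_cmult_right')
    moreover have "t powr p * S \<ge> 0" using S0 by simp
    ultimately show ?thesis using assms(1) by (simp add: normE_def powr_powr)
  qed
  have At: "(\<Sum>\<^sub>\<infinity>n. c n * \<bar>t * u n\<bar> powr q) = t powr q * A"
  proof -
    have "(\<Sum>\<^sub>\<infinity>n. c n * \<bar>t * u n\<bar> powr q) = (\<Sum>\<^sub>\<infinity>n. t powr q * (c n * \<bar>u n\<bar> powr q))"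
      using t by (intro infsum_cong) (simp add: abs_mult powr_mult)
    then show ?thesis by (simp add: A_def infsum_cmult_right')
  qed
  have logt: "logterm c q r (\<lambda>n. t * u n) n
      = t powr q * logterm c q r u n + (r * (t powr q * ln t)) * (c n * \<bar>u n\<bar> powr q)" for n
  proof (cases "t = 0 \<or> u n = 0")
    case True then show ?thesis by (auto simp: logterm_def)
  next
    case False
    then have "t > 0" "\<bar>u n\<bar> > 0" using t by auto
    then show ?thesis
      by (simp add: logterm_def abs_mult powr_mult ln_mult ln_powr algebra_simps)
  qed
  have Lt: "infsum (logterm c q r (\<lambda>n. t * u n)) UNIV = t powr q * L + r * (t powr q * ln t) * A"
  proof -
    have "infsum (logterm c q r (\<lambda>n. t * u n)) UNIV
       = (\<Sum>\<^sub>\<infinity>n. t powr q * logterm c q r u n + (r * (t powr q * ln t)) * (c n * \<bar>u n\<bar> powr q))"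
      by (rule infsum_cong) (rule logt)
    also have "\<dots> = (\<Sum>\<^sub>\<infinity>n. t powr q * logterm c q r u n) + (\<Sum>\<^sub>\<infinity>n. (r * (t powr q * ln t)) * (c n * \<bar>u n\<bar> powr q))"
      by (rule infsum_add) (auto intro: summable_on_cmult_right Lsum Asum)
    finally show ?thesis by (simp add: infsum_cmult_right' L_def A_def)
  qed
  have dIu: "dI a b c p q r u u = S - L"
  proof -
    have pw: "\<bar>x\<bar> powr (p - 2) * x * x = \<bar>x\<bar> powr p" for x :: real
    proof (cases "x = 0")
      case True then show ?thesis using assms(1) by simp
    next
      case False
      have "\<bar>x\<bar> powr (p - 2) * x * x = \<bar>x\<bar> powr (p - 2) * \<bar>x\<bar> powr 2"
        using False by (simp add: powr_realpow' abs_mult_self_eq flip: power2_eq_square)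
      also have "\<dots> = \<bar>x\<bar> powr p" by (subst powr_add[symmetric]) simp
      finally show ?thesis .
    qed
    have pw2: "\<bar>x\<bar> powr (q - 2) * x * x = \<bar>x\<bar> powr q" for x :: real
    proof (cases "x = 0")
      case True then show ?thesis using assms(1,2) by simp
    next
      case False
      have "\<bar>x\<bar> powr (q - 2) * x * x = \<bar>x\<bar> powr (q - 2) * \<bar>x\<bar> powr 2"
        using False by (simp add: powr_realpow' abs_mult_self_eq flip: power2_eq_square)
      also have "\<dots> = \<bar>x\<bar> powr q" by (subst powr_add[symmetric]) simp
      finally show ?thesis .
    qed
    have e1: "(\<Sum>\<^sub>\<infinity>n. a n * \<bar>fdiff u n\<bar> powr (p - 2) * fdiff u n * fdiff u n
              + b n * \<bar>u n\<bar> powr (p - 2) * u n * u n) = S"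
      unfolding S_def
      by (intro infsum_cong) (simp add: Eterm_def mult.assoc flip: pw)
    have e2: "(\<Sum>\<^sub>\<infinity>n. c n * \<bar>u n\<bar> powr (q - 2) * u n * u n * ln (\<bar>u n\<bar> powr r)) = L"
      unfolding L_def
    proof (rule infsum_cong)
      fix n :: int
      show "c n * \<bar>u n\<bar> powr (q - 2) * u n * u n * ln (\<bar>u n\<bar> powr r) = logterm c q r u n"
        unfolding logterm_def pw2[symmetric] by (simp only: mult.assoc)
    qed
    show ?thesis unfolding dI_def e1 e2 ..
  qed
  have key: "0 \<le> r / q\<^sup>2 * A * (1 - t powr q + q * (t powr q * ln t))"
    using key_ineq[OF t] assms(1,2,4) A0 by simp
  have Iu: "Ifun a b c p q r u = S / p + r / q\<^sup>2 * A - L / q"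
    by (simp add: Ifun_def normS A_def L_def)
  have It: "Ifun a b c p q r (\<lambda>n. t * u n) = t powr p * S / p + r / q\<^sup>2 * (t powr q * A)
      - (t powr q * L + r * (t powr q * ln t) * A) / q"
    by (simp add: Ifun_def normt At Lt)
  have qpos: "q > 0" using assms(1,2) by simp
  have ppos: "p > 0" using assms(1) by simp
  have diff: "(S / p + r / q\<^sup>2 * A - L / q) - (t powr p * S / p + r / q\<^sup>2 * (t powr q * A)
      - (t powr q * L + r * (t powr q * ln t) * A) / q
      + (1 - t powr q) / q * (S - L) + ((1 - t powr p) / p - (1 - t powr q) / q) * S)
      = r / q\<^sup>2 * A * (1 - t powr q + q * (t powr q * ln t))"
    using qpos ppos by (simp add: field_simps power2_eq_square)
  show ?thesis
    unfolding Iu It dIu normS using key diff by linarith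
qed

end
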